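(* If $n$ is a non-negative integer, then $$\sum_{k = 1}^n \sum_{j = \lfloor n/2 \rfloor }^{k - 1} \frac{1}{n - j}\binom{j}{n - j} = F_{n + 1} - 1.$$
   Context: $F_n$ are the Fibonacci numbers ($F_0=0$, $F_1=1$, $F_{n}=F_{n-1}+F_{n-2}$). A sum whose upper limit is smaller than its lower limit is zero. *)

theory Defs
  imports Complex_Main "HOL-Number_Theory.Fib"
begin

end

theory Submission
  imports Defs
begin

lemma swap_aux:
  fixes g :: "nat \<Rightarrow> real"
  shows "(\<Sum>k = 1..n. \<Sum>j = a..k - 1. g j) = (\<Sum>j = a..<n. real (n - j) * g j)"
proof (induction n)
  case 0
  then show ?case by simp
next
  case (Suc n)
  have "(\<Sum>k = 1..Suc n. \<Sum>j = a..k - 1. g j) = (\<Sum>k = 1..n. \<Sum>j = a..k - 1. g j) + (\<Sum>j = a..n. g j)"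
    by simp
  also have "\<dots> = (\<Sum>j = a..<n. real (n - j) * g j) + (\<Sum>j = a..<Suc n. g j)"
    using Suc by (simp add: atLeastLessThanSuc_atLeastAtMost)
  also have "\<dots> = (\<Sum>j = a..<Suc n. real (Suc n - j) * g j)"
  proof (cases "a \<le> n")
    case True
    have "(\<Sum>j = a..<Suc n. real (Suc n - j) * g j) = (\<Sum>j = a..<n. real (Suc n - j) * g j) + g n"
      using True by (simp add: sum.atLeastLessThan_Suc)
    also have "(\<Sum>j = a..<n. real (Suc n - j) * g j) = (\<Sum>j = a..<n. real (n - j) * g j) + (\<Sum>j = a..<n. g j)"
      by (simp add: sum.distrib[symmetric] Suc_diff_le algebra_simps)
    finally show ?thesis using True by (simp add: sum.atLeastLessThan_Suc)
  next
    case False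
    then show ?thesis by simp
  qed
  finally show ?case .
qed

theorem proposition13:
  fixes n :: nat
  shows "(\<Sum>k = 1..n. \<Sum>j = n div 2..k - 1. (1 / real (n - j)) * real (j choose (n - j)))
         = real (fib (n + 1)) - 1"
proof -
  have "(\<Sum>k = 1..n. \<Sum>j = n div 2..k - 1. (1 / real (n - j)) * real (j choose (n - j)))
      = (\<Sum>j = n div 2..<n. real (n - j) * ((1 / real (n - j)) * real (j choose (n - j))))"
    by (rule swap_aux)
  also have "\<dots> = (\<Sum>j = n div 2..<n. real (j choose (n - j)))"
    by (rule sum.cong) auto
  also have "\<dots> = (\<Sum>j = 0..<n. real (j choose (n - j)))"
  proof -
    have "(\<Sum>j = 0..<n. real (j choose (n - j))) = (\<Sum>j = 0..<n div 2. real (j choose (n - j))) + (\<Sum>j = n div 2..<n. real (j choose (n - j)))"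
      by (rule sum.atLeastLessThan_concat[symmetric]) auto
    moreover have "(\<Sum>j = 0..<n div 2. real (j choose (n - j))) = 0"
      by (rule sum.neutral) auto
    ultimately show ?thesis by simp
  qed
  also have "\<dots> = (\<Sum>j = 0..n. real (j choose (n - j))) - 1"
    by (simp add: atLeastLessThanSuc_atLeastAtMost[symmetric])
  also have "(\<Sum>j = 0..n. real (j choose (n - j))) = (\<Sum>k = 0..n. real ((n - k) choose k))"
    by (subst sum.atLeastAtMost_rev) (rule sum.cong, auto)
  also have "\<dots> = real (fib (n + 1))"
    using ne_diagonal_fib[of n] by (metis Suc_eq_plus1 of_nat_sum)
  finally show ?thesis .
qed

end
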